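(* For every Hermitian $a\in M_n$ we have $\tau(e^{a}\triangle a)\ge 0$, with equality if and only if $a\in\mathbb{C}1$.
   Context: Let $n\ge 2$, let $m\in\{1,\dots,n-1\}$ be relatively prime to $n$, and set $q=e^{2\pi i m/n}$. Let $M_n$ be the algebra of complex $n\times n$ matrices, with $1$ the identity matrix and $a^*$ the conjugate transpose. Let $u=\mathrm{diag}(1,q,\dots,q^{n-1})$ and let $v$ be the cyclic shift matrix with $v_{j,j+1}=1$ for $j=1,\dots,n-1$, $v_{n,1}=1$, other entries $0$. Let $x,y$ be any Hermitian matrices with $u=e^{\frac{2\pi i}{n}x}$ and $v=e^{\frac{2\pi i}{n}y}$. Define $\delta_1(a)=[y,a]$, $\delta_2(a)=-[x,a]$ and $\triangle=\delta_1^2+\delta_2^2$ on $M_n$. $\tau$ is the usual trace, and $e^a$ is the matrix exponential. *)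

theory Defs
  imports Complex_Main "HOL-Library.Complex_Order" "Jordan_Normal_Form.Matrix"
begin

definition cadj :: "complex mat \<Rightarrow> complex mat" where
  "cadj A = mat (dim_col A) (dim_row A) (\<lambda>(i,j). cnj (A $$ (j,i)))"

definition hermitian_mat :: "nat \<Rightarrow> complex mat \<Rightarrow> bool" where
  "hermitian_mat n A \<longleftrightarrow> A \<in> carrier_mat n n \<and> cadj A = A"

definition mexp :: "complex mat \<Rightarrow> complex mat" where
  "mexp A = mat (dim_row A) (dim_col A)
     (\<lambda>(i,j). (\<Sum>k. (A ^\<^sub>m k) $$ (i,j) / of_nat (fact k)))"

definition mtrace :: "complex mat \<Rightarrow> complex" where
  "mtrace A = (\<Sum>i<dim_row A. A $$ (i,i))"

definition comm :: "complex mat \<Rightarrow> complex mat \<Rightarrow> complex mat" where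
  "comm A B = A * B - B * A"

definition clock_mat :: "nat \<Rightarrow> nat \<Rightarrow> complex mat" where
  "clock_mat n m = mat n n (\<lambda>(i,j). if i = j then cis (2 * pi * real m / real n) ^ i else 0)"

definition shift_mat :: "nat \<Rightarrow> complex mat" where
  "shift_mat n = mat n n (\<lambda>(i,j). if j = (i + 1) mod n then 1 else 0)"

definition delta1 :: "complex mat \<Rightarrow> complex mat \<Rightarrow> complex mat" where
  "delta1 y a = comm y a"

definition delta2 :: "complex mat \<Rightarrow> complex mat \<Rightarrow> complex mat" where
  "delta2 x a = - comm x a"

definition laplacian :: "complex mat \<Rightarrow> complex mat \<Rightarrow> complex mat \<Rightarrow> complex mat" where
  "laplacian x y a = delta1 y (delta1 y a) + delta2 x (delta2 x a)"

end

theory Submission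
  imports Defs "Jordan_Normal_Form.Schur_Decomposition"
begin


lemma cadj_carrier[simp]: "A \<in> carrier_mat n m \<Longrightarrow> cadj A \<in> carrier_mat m n"
  by (auto simp: cadj_def)
lemma dim_cadj[simp]: "dim_row (cadj A) = dim_col A" "dim_col (cadj A) = dim_row A"
  by (auto simp: cadj_def)
lemma index_cadj[simp]: "i < dim_col A \<Longrightarrow> j < dim_row A \<Longrightarrow> cadj A $$ (i,j) = cnj (A $$ (j,i))"
  by (auto simp: cadj_def)
lemma cadj_cadj[simp]: "cadj (cadj A) = A"
  by (rule eq_matI) (auto simp: cadj_def)
lemma cadj_mult: "A \<in> carrier_mat n k \<Longrightarrow> B \<in> carrier_mat k m \<Longrightarrow> cadj (A * B) = cadj B * cadj A"
  by (rule eq_matI) (auto simp: scalar_prod_def cnj_sum mult.commute intro!: sum.cong)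

lemma sq_mult_carrier[simp]: "(A::complex mat) \<in> carrier_mat n n \<Longrightarrow> B \<in> carrier_mat n n \<Longrightarrow> A * B \<in> carrier_mat n n"
  by (rule mult_carrier_mat)

lemma sq_right_one[simp]: "(A::complex mat) \<in> carrier_mat n n \<Longrightarrow> A * 1\<^sub>m n = A"
  by (rule right_mult_one_mat) simp
lemma sq_left_one[simp]: "(A::complex mat) \<in> carrier_mat n n \<Longrightarrow> 1\<^sub>m n * A = A"
  by (rule left_mult_one_mat) simp

lemma unitary_completion:
  fixes v :: "complex vec"
  assumes v: "v \<in> carrier_vec n" and v0: "v \<noteq> 0\<^sub>v n"
  shows "\<exists>W s. W \<in> carrier_mat n n \<and> cadj W * W = 1\<^sub>m n \<and> W * cadj W = 1\<^sub>m n
     \<and> s \<noteq> 0 \<and> col W 0 = s \<cdot>\<^sub>v v"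
proof -
  interpret cof_vec_space n "TYPE(complex)" .
  define b where "b = basis_completion v"
  define ws where "ws = gram_schmidt n b"
  from basis_completion[OF v v0, folded b_def]
  have dist_b: "distinct b" 
    and indep: "\<not> lin_dep (set b)" and b: "set b \<subseteq> carrier_vec n" and hdb: "hd b = v" 
    and len_b: "length b = n" by auto
  have n: "n \<noteq> 0" using v v0 by auto
  from hdb len_b n obtain vs where bv: "b = v # vs" by (cases b, auto)
  from gram_schmidt_result[OF b dist_b indep refl, folded ws_def]
  have ws: "set ws \<subseteq> carrier_vec n" "corthogonal ws" "length ws = n" 
    by (auto simp: len_b)
  from gram_schmidt_hd[OF v, of vs, folded bv] have hdws: "hd ws = v" unfolding ws_def .
  define nf where "nf = (\<lambda>w::complex vec. complex_of_real (1 / sqrt (Re (w \<bullet>c w))))"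
  define ws' where "ws' = map (\<lambda>w. nf w \<cdot>\<^sub>v w) ws"
  define W where "W = mat_of_cols n ws'"
  have len': "length ws' = n" using ws by (simp add: ws'_def)
  have W: "W \<in> carrier_mat n n" unfolding W_def using len' by auto
  have wsi: "i < n \<Longrightarrow> ws ! i \<in> carrier_vec n" for i using ws by auto
  have Wij: "i < n \<Longrightarrow> j < n \<Longrightarrow> W $$ (i,j) = nf (ws ! j) * (ws ! j $ i)" for i j
    unfolding W_def ws'_def using ws wsi[of j] by (simp add: mat_of_cols_index)
  have pos: "i < n \<Longrightarrow> Re (ws!i \<bullet>c ws!i) > 0 \<and> ws!i \<bullet>c ws!i = complex_of_real (Re (ws!i \<bullet>c ws!i))" for i
  proof -
    assume i: "i < n"
    have ne: "ws!i \<bullet>c ws!i \<noteq> 0" using corthogonalD[OF ws(2), of i i] i ws by auto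
    have ge: "ws!i \<bullet>c ws!i \<ge> 0" by auto
    from ne ge show ?thesis by (auto simp: less_eq_complex_def complex_eq_iff)
  qed
  have WW: "cadj W * W = 1\<^sub>m n"
  proof (rule eq_matI)
    fix i j assume i: "i < dim_row (1\<^sub>m n)" and j: "j < dim_col (1\<^sub>m n)"
    hence i: "i < n" and j: "j < n" by auto
    have "(cadj W * W) $$ (i,j) = (\<Sum>k<n. cnj (W $$ (k,i)) * W $$ (k,j))"
      using W i j by (auto simp: scalar_prod_def atLeast0LessThan intro!: sum.cong)
    also have "\<dots> = (\<Sum>k<n. cnj (nf (ws!i)) * nf (ws!j) * (ws!j $ k * cnj (ws!i $ k)))"
      using i j by (auto simp: Wij intro!: sum.cong)
    also have "\<dots> = cnj (nf (ws!i)) * nf (ws!j) * (ws!j \<bullet>c ws!i)"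
      using wsi[OF i] wsi[OF j] by (simp add: scalar_prod_def sum_distrib_left atLeast0LessThan)
    also have "\<dots> = 1\<^sub>m n $$ (i,j)"
    proof (cases "i = j")
      case True
      have r: "Re (ws!i \<bullet>c ws!i) > 0" and e: "ws!i \<bullet>c ws!i = complex_of_real (Re (ws!i \<bullet>c ws!i))"
        using pos[OF i] by auto
      define r where "r = Re (ws!i \<bullet>c ws!i)"
      have "cnj (nf (ws!i)) * nf (ws!j) * (ws!j \<bullet>c ws!i) = complex_of_real ((1/sqrt r) * (1/sqrt r) * r)"
        unfolding nf_def True[symmetric] r_def by (subst e) (simp only: of_real_mult complex_cnj_complex_of_real)
      also have "(1/sqrt r) * (1/sqrt r) * r = 1" using r unfolding r_def[symmetric]
        by (simp add: field_simps)
      finally show ?thesis using True i by simp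
    next
      case False
      then show ?thesis using corthogonalD[OF ws(2), of j i] i j ws by auto
    qed
    finally show "(cadj W * W) $$ (i,j) = 1\<^sub>m n $$ (i,j)" .
  qed (use W in auto)
  have WW2: "W * cadj W = 1\<^sub>m n"
    using mat_mult_left_right_inverse[OF cadj_carrier[OF W] W WW] .
  have ws0: "ws ! 0 = v" using hdws ws n by (cases ws, auto)
  have c0: "col W 0 = nf v \<cdot>\<^sub>v v"
  proof -
    from ws0 show ?thesis using W n v Wij[of _ 0] by (auto intro!: eq_vecI)
  qed
  have "nf v \<noteq> 0"
  proof -
    have "Re (v \<bullet>c v) > 0" using pos[of 0] ws0 n by auto
    thus ?thesis unfolding nf_def by simp
  qed
  show ?thesis using W WW WW2 c0 \<open>nf v \<noteq> 0\<close> by blast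
qed

definition ext :: "nat \<Rightarrow> complex \<Rightarrow> complex mat \<Rightarrow> complex mat" where
  "ext m c X = mat (Suc m) (Suc m) (\<lambda>(i,j). if i = 0 \<and> j = 0 then c else if i = 0 \<or> j = 0 then 0 else X $$ (i-1, j-1))"

definition diagr :: "nat \<Rightarrow> (nat \<Rightarrow> real) \<Rightarrow> complex mat" where
  "diagr n d = mat n n (\<lambda>(i,j). if i = j then complex_of_real (d i) else 0)"

lemma ext_carrier[simp]: "ext m c X \<in> carrier_mat (Suc m) (Suc m)"
  by (simp add: ext_def)
lemma diagr_carrier[simp]: "diagr n d \<in> carrier_mat n n"
  by (simp add: diagr_def)

lemma ext_mult: assumes X: "X \<in> carrier_mat m m" and Y: "Y \<in> carrier_mat m m"
  shows "ext m a X * ext m b Y = ext m (a*b) (X*Y)"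
proof (rule eq_matI)
  fix i j assume "i < dim_row (ext m (a*b) (X*Y))" "j < dim_col (ext m (a*b) (X*Y))"
  hence i: "i < Suc m" and j: "j < Suc m" by (auto simp: ext_def)
  have "(ext m a X * ext m b Y) $$ (i,j) = (\<Sum>k\<in>{0..<Suc m}. ext m a X $$ (i,k) * ext m b Y $$ (k,j))"
    using i j by (simp add: scalar_prod_def ext_def)
  also have "\<dots> = ext m a X $$ (i,0) * ext m b Y $$ (0,j) + (\<Sum>k\<in>{0..<m}. ext m a X $$ (i,Suc k) * ext m b Y $$ (Suc k,j))"
    by (subst sum.atLeast0_lessThan_Suc_shift) (simp add: o_def)
  also have "\<dots> = ext m (a*b) (X*Y) $$ (i,j)"
    using i j X Y by (cases i; cases j) (auto simp: ext_def scalar_prod_def)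
  finally show "(ext m a X * ext m b Y) $$ (i,j) = ext m (a*b) (X*Y) $$ (i,j)" .
qed (auto simp: ext_def)

lemma ext_cadj: "X \<in> carrier_mat m m \<Longrightarrow> cadj (ext m c X) = ext m (cnj c) (cadj X)"
  by (rule eq_matI) (auto simp: ext_def cadj_def)

lemma ext_one: "ext m 1 (1\<^sub>m m) = 1\<^sub>m (Suc m)"
  by (rule eq_matI) (auto simp: ext_def)

lemma ext_diag: "ext m (complex_of_real r) (diagr m d) = diagr (Suc m) (\<lambda>i. if i = 0 then r else d (i - 1))"
  by (rule eq_matI) (auto simp: ext_def diagr_def)

lemma spectral:
  "hermitian_mat n A \<Longrightarrow> \<exists>U d. U \<in> carrier_mat n n \<and> cadj U * U = 1\<^sub>m n \<and> U * cadj U = 1\<^sub>m n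
     \<and> A = U * diagr n d * cadj U"
proof (induction n arbitrary: A)
  case 0
  then show ?case
    by (intro exI[of _ "1\<^sub>m 0"] exI[of _ "\<lambda>_. 0"]) (auto intro!: eq_matI simp: hermitian_mat_def diagr_def)
next
  case (Suc m A)
  have A: "A \<in> carrier_mat (Suc m) (Suc m)" and hA: "cadj A = A"
    using Suc.prems by (auto simp: hermitian_mat_def)
  obtain es where es: "char_poly A = (\<Prod>a\<leftarrow>es. [:- a, 1:])" "length es = Suc m"
    using char_poly_factorized[OF A] by blast
  then obtain e es' where ees: "es = e # es'" by (cases es) auto
  have ev: "eigenvalue A e" unfolding eigenvalue_root_char_poly[OF A] es(1) ees by simp
  define v where "v = find_eigenvector A e"
  from find_eigenvector[OF A ev] have "eigenvector A v e" unfolding v_def .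
  hence v: "v \<in> carrier_vec (Suc m)" "v \<noteq> 0\<^sub>v (Suc m)" "A *\<^sub>v v = e \<cdot>\<^sub>v v"
    unfolding eigenvector_def using A by auto
  obtain W s where W: "W \<in> carrier_mat (Suc m) (Suc m)" and WW: "cadj W * W = 1\<^sub>m (Suc m)"
    and WW2: "W * cadj W = 1\<^sub>m (Suc m)" and s: "s \<noteq> 0" and cW: "col W 0 = s \<cdot>\<^sub>v v"
    using unitary_completion[OF v(1) v(2)] by blast
  define A' where "A' = cadj W * (A * W)"
  have A'c: "A' \<in> carrier_mat (Suc m) (Suc m)" using A W unfolding A'_def by (metis cadj_carrier mult_carrier_mat)
  have col0: "A' $$ (i,0) = (if i = 0 then e else 0)" if i: "i < Suc m" for i
  proof -
    have "col (A * W) 0 = A *\<^sub>v col W 0" by (rule col_mult2[OF A W]) simp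
    also have "\<dots> = e \<cdot>\<^sub>v col W 0" using A v unfolding cW
      by (simp add: mult_mat_vec smult_smult_assoc mult.commute)
    finally have c: "col (A * W) 0 = e \<cdot>\<^sub>v col W 0" .
    have "A' $$ (i,0) = row (cadj W) i \<bullet> col (A * W) 0"
      unfolding A'_def using A W i by simp
    also have "\<dots> = e * (row (cadj W) i \<bullet> col W 0)" unfolding c using W i
      by (simp add: scalar_prod_smult_right)
    also have "row (cadj W) i \<bullet> col W 0 = (cadj W * W) $$ (i,0)" using W i by simp
    finally show ?thesis using i by (simp add: WW)
  qed
  have hA': "cadj A' = A'"
  proof -
    have "cadj A' = cadj (A * W) * cadj (cadj W)" unfolding A'_def
      by (rule cadj_mult[of _ "Suc m" "Suc m"]) (use A W in \<open>auto intro: mult_carrier_mat\<close>)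
    also have "cadj (A * W) = cadj W * cadj A" by (rule cadj_mult[OF A W])
    finally show ?thesis unfolding A'_def using A W hA by (simp add: assoc_mult_mat[of _ "Suc m" "Suc m" _ "Suc m" _ "Suc m"])
  qed
  have row0: "A' $$ (0,j) = (if j = 0 then cnj e else 0)" if j: "j < Suc m" for j
  proof -
    have "A' $$ (0,j) = cadj A' $$ (0,j)" by (simp add: hA')
    also have "\<dots> = cnj (A' $$ (j,0))" using A'c j by simp
    finally show ?thesis using col0[OF j] by simp
  qed
  have ereal: "e = complex_of_real (Re e)"
    using col0[of 0] row0[of 0] by (simp add: complex_eq_iff)
  define A3 where "A3 = mat m m (\<lambda>(i,j). A' $$ (Suc i, Suc j))"
  have hA3: "hermitian_mat m A3"
  proof -
    have "cadj A3 = A3"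
    proof (rule eq_matI)
      fix i j assume "i < dim_row A3" "j < dim_col A3"
      hence i: "i < m" and j: "j < m" by (auto simp: A3_def)
      have "cadj A3 $$ (i,j) = cnj (A' $$ (Suc j, Suc i))" using i j by (simp add: A3_def)
      also have "\<dots> = cadj A' $$ (Suc i, Suc j)" using A'c i j by simp
      finally show "cadj A3 $$ (i,j) = A3 $$ (i,j)" using i j by (simp add: hA' A3_def)
    qed (auto simp: A3_def)
    thus ?thesis by (simp add: hermitian_mat_def A3_def)
  qed
  have A'ext: "A' = ext m e A3"
    by (rule eq_matI) (use A'c col0 row0 ereal in \<open>auto simp: ext_def A3_def\<close>)
  obtain U3 d3 where U3: "U3 \<in> carrier_mat m m" and UU3: "cadj U3 * U3 = 1\<^sub>m m"
    and UU3': "U3 * cadj U3 = 1\<^sub>m m" and A3d: "A3 = U3 * diagr m d3 * cadj U3"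
    using Suc.IH[OF hA3] by blast
  define U where "U = W * ext m 1 U3"
  define d where "d = (\<lambda>i. if i = 0 then Re e else d3 (i - 1))"
  have Uc: "U \<in> carrier_mat (Suc m) (Suc m)" using W by (simp add: U_def)
  have cU: "cadj U = ext m 1 (cadj U3) * cadj W"
    unfolding U_def using W U3 by (simp add: cadj_mult[OF W ext_carrier] ext_cadj)
  have "cadj U * U = ext m 1 (cadj U3) * (cadj W * W) * ext m 1 U3"
    unfolding cU unfolding U_def using W U3
    by (simp add: assoc_mult_mat[of _ "Suc m" "Suc m" _ "Suc m" _ "Suc m"])
  also have "\<dots> = 1\<^sub>m (Suc m)" using U3 by (simp add: WW ext_mult UU3 ext_one)
  finally have UU: "cadj U * U = 1\<^sub>m (Suc m)" .
  have "U * cadj U = W * (ext m 1 U3 * ext m 1 (cadj U3)) * cadj W"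
    unfolding cU unfolding U_def using W U3
    by (simp add: assoc_mult_mat[of _ "Suc m" "Suc m" _ "Suc m" _ "Suc m"])
  also have "\<dots> = 1\<^sub>m (Suc m)" using U3 W by (simp add: WW2 ext_mult UU3' ext_one)
  finally have UU': "U * cadj U = 1\<^sub>m (Suc m)" .
  have "A' = ext m 1 U3 * ext m e (diagr m d3) * ext m 1 (cadj U3)"
    unfolding A'ext A3d using U3 by (simp add: ext_mult)
  also have "ext m e (diagr m d3) = diagr (Suc m) d"
    unfolding d_def by (subst ereal) (rule ext_diag)
  finally have A'd: "A' = ext m 1 U3 * diagr (Suc m) d * ext m 1 (cadj U3)" .
  have "A = (W * cadj W) * A * (W * cadj W)" using A by (simp add: WW2)
  also have "\<dots> = W * A' * cadj W" unfolding A'_def using A W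
    by (simp add: assoc_mult_mat[of _ "Suc m" "Suc m" _ "Suc m" _ "Suc m"])
  also have "\<dots> = U * diagr (Suc m) d * cadj U" unfolding A'd cU unfolding U_def using W U3
    by (simp add: assoc_mult_mat[of _ "Suc m" "Suc m" _ "Suc m" _ "Suc m"])
  finally show ?case using Uc UU UU' by blast
qed
lemma exp_sums_c: "(\<lambda>k. (z::complex)^k / of_nat (fact k)) sums exp z"
proof -
  have "(\<lambda>k. z^k /\<^sub>R fact k) sums exp z" by (rule exp_converges)
  moreover have "(\<lambda>k. z^k /\<^sub>R fact k) = (\<lambda>k. z^k / of_nat (fact k))"
    by (rule ext) (simp add: scaleR_conv_of_real divide_inverse mult.commute)
  ultimately show ?thesis by simp
qed
definition diagc :: "nat \<Rightarrow> (nat \<Rightarrow> complex) \<Rightarrow> complex mat" where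
  "diagc n f = mat n n (\<lambda>(i,j). if i = j then f i else 0)"
lemma diagc_carrier[simp]: "diagc n f \<in> carrier_mat n n" by (simp add: diagc_def)
lemma dim_diagc: "dim_row (diagc n f) = n" "dim_col (diagc n f) = n" by (simp_all add: diagc_def)
lemma diagc_mult_left: "B \<in> carrier_mat n m \<Longrightarrow> i < n \<Longrightarrow> j < m \<Longrightarrow> (diagc n f * B) $$ (i,j) = f i * B $$ (i,j)"
  by (simp add: diagc_def scalar_prod_def if_distrib[where f="\<lambda>x. x * _"] sum.delta cong: if_cong)
lemma diagc_mult_right: "B \<in> carrier_mat m n \<Longrightarrow> i < m \<Longrightarrow> j < n \<Longrightarrow> (B * diagc n f) $$ (i,j) = B $$ (i,j) * f j"
  by (simp add: diagc_def scalar_prod_def if_distrib[where f="\<lambda>x. _ * x"] sum.delta' cong: if_cong)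
lemma diagc_mult: "diagc n f * diagc n g = diagc n (\<lambda>i. f i * g i)"
proof (rule eq_matI)
  fix i j assume "i < dim_row (diagc n (\<lambda>i. f i * g i))" "j < dim_col (diagc n (\<lambda>i. f i * g i))"
  hence i: "i < n" and j: "j < n" by (auto simp: diagc_def)
  show "(diagc n f * diagc n g) $$ (i, j) = diagc n (\<lambda>i. f i * g i) $$ (i, j)"
    by (subst diagc_mult_left[OF diagc_carrier i j]) (use i j in \<open>simp add: diagc_def\<close>)
qed (auto simp: diagc_def)

lemma UDV_entry: assumes "U \<in> carrier_mat n n" "V \<in> carrier_mat n n" "i < n" "j < n"
  shows "(U * diagc n f * V) $$ (i,j) = (\<Sum>l<n. U$$(i,l) * f l * V$$(l,j))"
proof -
  have "(U * diagc n f * V) $$ (i,j) = (\<Sum>l<n. (U * diagc n f) $$ (i,l) * V$$(l,j))"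
    using assms by (simp add: scalar_prod_def atLeast0LessThan, intro sum.cong) (auto simp: diagc_def)
  also have "\<dots> = (\<Sum>l<n. U$$(i,l) * f l * V$$(l,j))"
    by (rule sum.cong) (use assms in \<open>auto simp: diagc_mult_right\<close>)
  finally show ?thesis .
qed

lemma diagc_one: "diagc n (\<lambda>_. 1) = 1\<^sub>m n"
  by (rule eq_matI) (auto simp: diagc_def)

lemma pow_UDV: assumes U: "U \<in> carrier_mat n n" and V: "V \<in> carrier_mat n n"
  and VU: "V * U = 1\<^sub>m n" and UV: "U * V = 1\<^sub>m n"
  shows "(U * diagc n f * V) ^\<^sub>m k = U * diagc n (\<lambda>i. f i ^ k) * V"
proof (induction k)
  case 0
  then show ?case using U V UV by (simp add: diagc_one)
next
  case (Suc k)
  have "(U * diagc n f * V) ^\<^sub>m Suc k = U * diagc n (\<lambda>i. f i ^ k) * V * (U * diagc n f * V)"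
    by (simp add: Suc.IH)
  also have "\<dots> = U * diagc n (\<lambda>i. f i ^ k) * (V * U) * diagc n f * V"
    using U V by (simp add: assoc_mult_mat[of _ n n _ n _ n])
  also have "\<dots> = U * diagc n (\<lambda>i. f i ^ Suc k) * V"
    using U V by (simp add: VU assoc_mult_mat[OF U diagc_carrier diagc_carrier] diagc_mult mult.commute)
  finally show ?case .
qed

lemma mexp_UDV: assumes U: "U \<in> carrier_mat n n" and V: "V \<in> carrier_mat n n"
  and VU: "V * U = 1\<^sub>m n" and UV: "U * V = 1\<^sub>m n"
  shows "mexp (U * diagc n f * V) = U * diagc n (\<lambda>i. exp (f i)) * V"
proof (rule eq_matI)
  fix i j assume "i < dim_row (U * diagc n (\<lambda>i. exp (f i)) * V)" "j < dim_col (U * diagc n (\<lambda>i. exp (f i)) * V)"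
  hence i: "i < n" and j: "j < n" using U V by auto
  have "(\<lambda>k. \<Sum>l<n. (U$$(i,l) * V$$(l,j)) * (f l ^ k / of_nat (fact k))) sums
      (\<Sum>l<n. (U$$(i,l) * V$$(l,j)) * exp (f l))"
    by (intro sums_sum sums_mult exp_sums_c)
  moreover have "(\<lambda>k. \<Sum>l<n. (U$$(i,l) * V$$(l,j)) * (f l ^ k / of_nat (fact k))) = 
     (\<lambda>k. ((U * diagc n f * V) ^\<^sub>m k) $$ (i,j) / of_nat (fact k))"
    by (rule ext) (simp add: pow_UDV[OF U V VU UV] UDV_entry[OF U V i j] sum_divide_distrib mult_ac)
  ultimately have "(\<lambda>k. ((U * diagc n f * V) ^\<^sub>m k) $$ (i,j) / of_nat (fact k)) sums
      (U * diagc n (\<lambda>i. exp (f i)) * V) $$ (i,j)"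
    by (simp add: UDV_entry[OF U V i j] mult_ac)
  thus "mexp (U * diagc n f * V) $$ (i,j) = (U * diagc n (\<lambda>i. exp (f i)) * V) $$ (i,j)"
    using U V i j by (simp add: mexp_def sums_iff)
qed (use U V in \<open>auto simp: mexp_def\<close>)

lemma comm_carrier[simp]: "(A::complex mat) \<in> carrier_mat n n \<Longrightarrow> B \<in> carrier_mat n n \<Longrightarrow> comm A B \<in> carrier_mat n n"
  unfolding comm_def by (rule minus_carrier_mat) auto

lemma neg_comm_neg: "(A::complex mat) \<in> carrier_mat n n \<Longrightarrow> B \<in> carrier_mat n n \<Longrightarrow> - comm A (- B) = comm A B"
  by (rule eq_matI) (auto simp: comm_def)

lemma laplacian_alt: "x \<in> carrier_mat n n \<Longrightarrow> y \<in> carrier_mat n n \<Longrightarrow> a \<in> carrier_mat n n \<Longrightarrow>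
  laplacian x y a = comm y (comm y a) + comm x (comm x a)"
  by (simp add: laplacian_def delta1_def delta2_def neg_comm_neg)

definition cj :: "complex mat \<Rightarrow> complex mat \<Rightarrow> complex mat" where
  "cj U X = U * X * cadj U"

context
  fixes U :: "complex mat" and n :: nat
  assumes U: "U \<in> carrier_mat n n" and UU: "cadj U * U = 1\<^sub>m n" and UU': "U * cadj U = 1\<^sub>m n"
begin

lemma cj_carrier[simp]: "X \<in> carrier_mat n n \<Longrightarrow> cj U X \<in> carrier_mat n n"
  using U by (simp add: cj_def)

lemma cj_mult: "X \<in> carrier_mat n n \<Longrightarrow> Y \<in> carrier_mat n n \<Longrightarrow> cj U X * cj U Y = cj U (X * Y)"
proof -
  assume X: "X \<in> carrier_mat n n" and Y: "Y \<in> carrier_mat n n"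
  have "cj U X * cj U Y = U * X * (cadj U * U) * Y * cadj U" unfolding cj_def using U X Y
    by (simp add: assoc_mult_mat[of _ n n _ n _ n])
  also have "\<dots> = cj U (X * Y)" unfolding cj_def using U X Y
    by (simp add: UU assoc_mult_mat[of _ n n _ n _ n])
  finally show ?thesis .
qed

lemma cj_minus: "X \<in> carrier_mat n n \<Longrightarrow> Y \<in> carrier_mat n n \<Longrightarrow> cj U X - cj U Y = cj U (X - Y)"
proof -
  assume X: "X \<in> carrier_mat n n" and Y: "Y \<in> carrier_mat n n"
  have "U * (X - Y) = U*X - U*Y" by (rule mult_minus_distrib_mat[OF U X Y])
  moreover have "(U*X - U*Y) * cadj U = U*X*cadj U - U*Y*cadj U"
    by (rule minus_mult_distrib_mat) (use U X Y in auto)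
  ultimately show ?thesis unfolding cj_def by simp
qed

lemma cj_add: "X \<in> carrier_mat n n \<Longrightarrow> Y \<in> carrier_mat n n \<Longrightarrow> cj U X + cj U Y = cj U (X + Y)"
proof -
  assume X: "X \<in> carrier_mat n n" and Y: "Y \<in> carrier_mat n n"
  have "U * (X + Y) = U*X + U*Y" by (rule mult_add_distrib_mat[OF U X Y])
  moreover have "(U*X + U*Y) * cadj U = U*X*cadj U + U*Y*cadj U"
    by (rule add_mult_distrib_mat) (use U X Y in auto)
  ultimately show ?thesis unfolding cj_def by simp
qed

lemma cj_comm: "X \<in> carrier_mat n n \<Longrightarrow> Y \<in> carrier_mat n n \<Longrightarrow> comm (cj U X) (cj U Y) = cj U (comm X Y)"
  unfolding comm_def by (simp add: cj_mult cj_minus)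

lemma cj_inv: "X \<in> carrier_mat n n \<Longrightarrow> cj U (cadj U * X * U) = X"
proof -
  assume X: "X \<in> carrier_mat n n"
  have "cj U (cadj U * X * U) = (U * cadj U) * X * (U * cadj U)" unfolding cj_def using U X
    by (simp add: assoc_mult_mat[of _ n n _ n _ n])
  thus ?thesis using X by (simp add: UU')
qed

end

lemma mtrace_comm: "(A::complex mat) \<in> carrier_mat n m \<Longrightarrow> B \<in> carrier_mat m n \<Longrightarrow> mtrace (A * B) = mtrace (B * A)"
  unfolding mtrace_def
  by (simp add: scalar_prod_def atLeast0LessThan mult.commute, subst sum.swap, simp)

lemma sym_sum: assumes sym: "\<And>i j. i < n \<Longrightarrow> j < n \<Longrightarrow> g i j = g j i"
  shows "(\<Sum>i<n. e i * (\<Sum>j<n. 2 * g i j * (d i - d j))) =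
    (\<Sum>i<n. \<Sum>j<n. g i j * (e i - e j) * (d i - d j :: real))"
proof -
  define S1 where "S1 = (\<Sum>i<n. \<Sum>j<n. g i j * e i * (d i - d j))"
  have S2: "(\<Sum>i<n. \<Sum>j<n. g i j * e j * (d i - d j)) = - S1"
    unfolding S1_def by (subst sum.swap) (auto simp: sum_negf[symmetric] algebra_simps sym intro!: sum.cong)
  have "(\<Sum>i<n. e i * (\<Sum>j<n. 2 * g i j * (d i - d j))) = 2 * S1"
    unfolding S1_def by (simp add: sum_distrib_left algebra_simps)
  moreover have "(\<Sum>i<n. \<Sum>j<n. g i j * (e i - e j) * (d i - d j)) = S1 - (\<Sum>i<n. \<Sum>j<n. g i j * e j * (d i - d j))"
    unfolding S1_def by (simp add: sum_subtractf[symmetric] algebra_simps)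
  ultimately show ?thesis using S2 by simp
qed

lemma exp_term_nonneg: "(exp a - exp b) * (a - b :: real) \<ge> 0"
  by (cases "a \<le> b") (auto intro: mult_nonpos_nonpos mult_nonneg_nonneg)

lemma exp_term_pos: "a \<noteq> b \<Longrightarrow> (exp a - exp b) * (a - b :: real) > 0"
  by (cases "a < b") (auto intro: mult_neg_neg mult_pos_pos)

lemma comm_entry0: "(A::complex mat) \<in> carrier_mat n n \<Longrightarrow> B \<in> carrier_mat n n \<Longrightarrow> i < n \<Longrightarrow> j < n \<Longrightarrow>
   comm A B $$ (i,j) = (A * B) $$ (i,j) - (B * A) $$ (i,j)"
  unfolding comm_def by (rule index_minus_mat) auto

lemma comm_entry: "(A::complex mat) \<in> carrier_mat n n \<Longrightarrow> B \<in> carrier_mat n n \<Longrightarrow> i < n \<Longrightarrow> j < n \<Longrightarrow>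
   comm A B $$ (i,j) = (\<Sum>k<n. A$$(i,k) * B$$(k,j)) - (\<Sum>k<n. B$$(i,k) * A$$(k,j))"
  by (subst comm_entry0[of _ n]) (auto simp: scalar_prod_def atLeast0LessThan)

lemma comm_diag_entry: "z \<in> carrier_mat n n \<Longrightarrow> k < n \<Longrightarrow> l < n \<Longrightarrow>
   comm z (diagc n f) $$ (k,l) = z$$(k,l) * (f l - f k)"
  by (subst comm_entry0[of _ n]) (auto simp: diagc_mult_left diagc_mult_right algebra_simps)

lemma dcomm_entry: assumes z: "z \<in> carrier_mat n n" and i: "i < n"
  shows "comm z (comm z (diagc n f)) $$ (i,i) = (\<Sum>j<n. 2 * (z$$(i,j) * z$$(j,i)) * (f i - f j))"
proof -
  let ?C = "comm z (diagc n f)"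
  have C: "?C \<in> carrier_mat n n" using z by simp
  have "comm z ?C $$ (i,i) = (\<Sum>j<n. z$$(i,j) * ?C$$(j,i)) - (\<Sum>j<n. ?C$$(i,j) * z$$(j,i))"
    using z C i by (simp add: comm_entry)
  also have "\<dots> = (\<Sum>j<n. z$$(i,j) * (z$$(j,i) * (f i - f j)) - z$$(i,j) * (f j - f i) * z$$(j,i))"
    by (simp add: sum_subtractf comm_diag_entry[OF z] i)
  also have "\<dots> = (\<Sum>j<n. 2 * (z$$(i,j) * z$$(j,i)) * (f i - f j))"
    by (rule sum.cong) (auto simp: algebra_simps)
  finally show ?thesis .
qed

lemma diagr_diagc: "diagr n d = diagc n (\<lambda>i. complex_of_real (d i))"
  by (simp add: diagr_def diagc_def)

lemma herm_entry: "cadj z = z \<Longrightarrow> z \<in> carrier_mat n n \<Longrightarrow> i < n \<Longrightarrow> j < n \<Longrightarrow> z $$ (j,i) = cnj (z $$ (i,j))"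
  by (metis index_cadj carrier_matD)

lemma dcomm_herm: assumes z: "z \<in> carrier_mat n n" "cadj z = z" and i: "i < n"
  shows "comm z (comm z (diagr n d)) $$ (i,i) = complex_of_real (\<Sum>j<n. 2 * (cmod (z$$(i,j)))^2 * (d i - d j))"
proof -
  have "comm z (comm z (diagr n d)) $$ (i,i) = (\<Sum>j<n. 2 * (z$$(i,j) * z$$(j,i)) * (complex_of_real (d i) - complex_of_real (d j)))"
    unfolding diagr_diagc by (rule dcomm_entry[OF z(1) i])
  also have "\<dots> = (\<Sum>j<n. complex_of_real (2 * (cmod (z$$(i,j)))^2 * (d i - d j)))"
    by (rule sum.cong) (simp_all add: herm_entry[OF z(2) z(1) i] complex_norm_square[symmetric] del: of_real_power)
  finally show ?thesis by simp
qed

lemma trace_lap_diag: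
  assumes z: "z \<in> carrier_mat n n" "cadj z = z" and w: "w \<in> carrier_mat n n" "cadj w = w"
  shows "mtrace (diagc n (\<lambda>i. exp (complex_of_real (d i))) * laplacian w z (diagr n d)) =
    complex_of_real (\<Sum>i<n. \<Sum>j<n. ((cmod (z$$(i,j)))^2 + (cmod (w$$(i,j)))^2) * (exp (d i) - exp (d j)) * (d i - d j))"
proof -
  define g where "g = (\<lambda>i j. (cmod (z$$(i,j)))^2 + (cmod (w$$(i,j)))^2)"
  have gs: "g i j = g j i" if "i < n" "j < n" for i j
    unfolding g_def using herm_entry[OF z(2) z(1) that] herm_entry[OF w(2) w(1) that] by simp
  let ?L = "laplacian w z (diagr n d)"
  have L: "?L = comm z (comm z (diagr n d)) + comm w (comm w (diagr n d))"
    using z w by (simp add: laplacian_alt)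
  have Lc: "?L \<in> carrier_mat n n" unfolding L using z w by simp
  have Lii: "?L $$ (i,i) = complex_of_real (\<Sum>j<n. 2 * g i j * (d i - d j))" if i: "i < n" for i
  proof -
    have "?L $$ (i,i) = comm z (comm z (diagr n d)) $$ (i,i) + comm w (comm w (diagr n d)) $$ (i,i)"
      unfolding L by (rule index_add_mat) (use carrier_matD[OF comm_carrier[OF w(1) comm_carrier[OF w(1) diagr_carrier]]] i in auto)
    also have "\<dots> = complex_of_real (\<Sum>j<n. 2 * g i j * (d i - d j))"
    proof -
      have "(\<Sum>j<n. 2 * (cmod (z$$(i,j)))^2 * (d i - d j)) + (\<Sum>j<n. 2 * (cmod (w$$(i,j)))^2 * (d i - d j))
        = (\<Sum>j<n. 2 * g i j * (d i - d j))"
        by (simp add: g_def sum.distrib[symmetric] algebra_simps)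
      thus ?thesis unfolding dcomm_herm[OF z i] dcomm_herm[OF w i] of_real_add[symmetric] by simp
    qed
    finally show ?thesis .
  qed
  have "mtrace (diagc n (\<lambda>i. exp (complex_of_real (d i))) * ?L) = (\<Sum>i<n. exp (complex_of_real (d i)) * ?L $$ (i,i))"
    unfolding mtrace_def by (simp add: dim_diagc, rule sum.cong) (simp_all add: diagc_mult_left[OF Lc])
  also have "\<dots> = complex_of_real (\<Sum>i<n. exp (d i) * (\<Sum>j<n. 2 * g i j * (d i - d j)))"
    by (simp add: Lii exp_of_real)
  also have "(\<Sum>i<n. exp (d i) * (\<Sum>j<n. 2 * g i j * (d i - d j))) = (\<Sum>i<n. \<Sum>j<n. g i j * (exp (d i) - exp (d j)) * (d i - d j))"
    by (rule sym_sum) (rule gs)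
  finally show ?thesis unfolding g_def .
qed

lemma cadj_conj: assumes U: "U \<in> carrier_mat n n" and Y: "Y \<in> carrier_mat n n"
  shows "cadj (cadj U * Y * U) = cadj U * cadj Y * U"
proof -
  have "cadj (cadj U * Y * U) = cadj U * cadj (cadj U * Y)"
    by (rule cadj_mult[of _ n n]) (use U Y in auto)
  also have "cadj (cadj U * Y) = cadj Y * U"
    using cadj_mult[OF cadj_carrier[OF U] Y] by simp
  finally show ?thesis using U Y by (simp add: assoc_mult_mat[of _ n n _ n _ n])
qed

lemma comm_zero: assumes A: "(A::complex mat) \<in> carrier_mat n n" and B: "B \<in> carrier_mat n n"
  and c: "comm A B = 0\<^sub>m n n" shows "A * B = B * A"
proof (rule eq_matI)
  fix i j assume "i < dim_row (B * A)" "j < dim_col (B * A)"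
  hence i: "i < n" and j: "j < n" using A B by auto
  have "comm A B $$ (i,j) = 0" using c i j by simp
  thus "(A * B) $$ (i,j) = (B * A) $$ (i,j)" using comm_entry0[OF A B i j] by simp
qed (use A B in auto)

lemma main_trace:
  assumes hx: "hermitian_mat n x" and hy: "hermitian_mat n y" and ha: "hermitian_mat n a"
  shows "\<exists>R. mtrace (mexp a * laplacian x y a) = complex_of_real R \<and> R \<ge> 0 \<and>
     (R = 0 \<longrightarrow> x * a = a * x \<and> y * a = a * y)"
proof -
  have x: "x \<in> carrier_mat n n" "cadj x = x" using hx by (auto simp: hermitian_mat_def)
  have y: "y \<in> carrier_mat n n" "cadj y = y" using hy by (auto simp: hermitian_mat_def)
  have a: "a \<in> carrier_mat n n" using ha by (auto simp: hermitian_mat_def)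
  obtain U d where U: "U \<in> carrier_mat n n" and UU: "cadj U * U = 1\<^sub>m n" and UU': "U * cadj U = 1\<^sub>m n"
    and ad: "a = U * diagr n d * cadj U"
    using spectral[OF ha] by blast
  define z where "z = cadj U * y * U"
  define w where "w = cadj U * x * U"
  have zc: "z \<in> carrier_mat n n" "cadj z = z" unfolding z_def using U y
    by (simp_all add: cadj_conj)
  have wc: "w \<in> carrier_mat n n" "cadj w = w" unfolding w_def using U x
    by (simp_all add: cadj_conj)
  let ?D = "diagr n d"
  let ?E = "diagc n (\<lambda>i. exp (complex_of_real (d i)))"
  have yz: "y = cj U z" unfolding z_def by (rule cj_inv[OF U UU UU' y(1), symmetric])
  have xw: "x = cj U w" unfolding w_def by (rule cj_inv[OF U UU UU' x(1), symmetric])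
  have aD: "a = cj U ?D" unfolding cj_def by (rule ad)
  have ea: "mexp a = cj U ?E" unfolding ad cj_def diagr_diagc
    by (rule mexp_UDV[OF U cadj_carrier[OF U] UU UU'])
  have lap: "laplacian x y a = cj U (laplacian w z ?D)"
    using zc wc cj_carrier[OF U UU UU', of z] cj_carrier[OF U UU UU', of w] cj_carrier[OF U UU UU', of ?D]
    by (simp add: xw yz aD laplacian_alt cj_comm[OF U UU UU'] cj_add[OF U UU UU'])
  have "mtrace (mexp a * laplacian x y a) = mtrace (cj U (?E * laplacian w z ?D))"
    unfolding ea lap using zc wc by (simp add: laplacian_alt cj_mult[OF U UU UU'])
  also have "\<dots> = mtrace (?E * laplacian w z ?D)"
  proof -
    have Mc: "?E * laplacian w z ?D \<in> carrier_mat n n" using zc wc by (simp add: laplacian_alt)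
    have "mtrace (cj U (?E * laplacian w z ?D)) = mtrace (cadj U * (U * (?E * laplacian w z ?D)))"
      unfolding cj_def using U Mc by (subst mtrace_comm[of _ n n]) (auto simp: assoc_mult_mat[of _ n n _ n _ n])
    also have "\<dots> = mtrace (?E * laplacian w z ?D)" using U Mc
      by (simp add: UU flip: assoc_mult_mat[of "cadj U" n n U n _ n])
    finally show ?thesis .
  qed
  also have "\<dots> = complex_of_real (\<Sum>i<n. \<Sum>j<n. ((cmod (z$$(i,j)))^2 + (cmod (w$$(i,j)))^2) * (exp (d i) - exp (d j)) * (d i - d j))"
    (is "_ = complex_of_real ?R")
    by (rule trace_lap_diag[OF zc wc])
  finally have T: "mtrace (mexp a * laplacian x y a) = complex_of_real ?R" .
  have tnn: "((cmod (z$$(i,j)))^2 + (cmod (w$$(i,j)))^2) * (exp (d i) - exp (d j)) * (d i - d j) \<ge> 0" for i j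
    unfolding mult.assoc by (intro mult_nonneg_nonneg exp_term_nonneg) auto
  have Rnn: "?R \<ge> 0" by (intro sum_nonneg tnn)
  have R0: "x * a = a * x \<and> y * a = a * y" if R0: "?R = 0"
  proof -
    have "\<forall>i<n. \<forall>j<n. ((cmod (z$$(i,j)))^2 + (cmod (w$$(i,j)))^2) * (exp (d i) - exp (d j)) * (d i - d j) = 0"
      using R0 by (subst (asm) sum_nonneg_eq_0_iff) (auto intro!: sum_nonneg tnn simp: sum_nonneg_eq_0_iff tnn)
    hence zw: "(z$$(i,j) = 0 \<and> w$$(i,j) = 0) \<or> d i = d j" if "i < n" "j < n" for i j
      using that exp_term_pos[of "d i" "d j"]
      by (metis (no_types, lifting) add_nonneg_eq_0_iff mult.assoc mult_eq_0_iff norm_eq_zero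
          order_less_irrefl power_eq_0_iff zero_le_power2)
    have cz: "comm z ?D = 0\<^sub>m n n"
    proof (rule eq_matI)
      fix i j assume "i < dim_row (0\<^sub>m n n :: complex mat)" "j < dim_col (0\<^sub>m n n :: complex mat)"
      hence i: "i < n" and j: "j < n" by auto
      show "comm z ?D $$ (i,j) = 0\<^sub>m n n $$ (i,j)"
        using zw[OF i j] i j by (auto simp: diagr_diagc comm_diag_entry[OF zc(1)])
    qed (use carrier_matD[OF comm_carrier[OF zc(1) diagr_carrier]] in auto)
    have cw: "comm w ?D = 0\<^sub>m n n"
    proof (rule eq_matI)
      fix i j assume "i < dim_row (0\<^sub>m n n :: complex mat)" "j < dim_col (0\<^sub>m n n :: complex mat)"
      hence i: "i < n" and j: "j < n" by auto
      show "comm w ?D $$ (i,j) = 0\<^sub>m n n $$ (i,j)"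
        using zw[OF i j] i j by (auto simp: diagr_diagc comm_diag_entry[OF wc(1)])
    qed (use carrier_matD[OF comm_carrier[OF wc(1) diagr_carrier]] in auto)
    have "comm y a = 0\<^sub>m n n" unfolding yz aD using zc
      by (simp add: cj_comm[OF U UU UU'] cz, simp add: cj_def) (use U in simp)
    moreover have "comm x a = 0\<^sub>m n n" unfolding xw aD using wc
      by (simp add: cj_comm[OF U UU UU'] cw, simp add: cj_def) (use U in simp)
    ultimately show ?thesis using comm_zero[OF x(1) a] comm_zero[OF y(1) a] by simp
  qed
  show ?thesis using T Rnn R0 by blast
qed
lemma q_pow_inj_aux:
  assumes n: "0 < n" and cop: "coprime m n" and ij: "i < j" and j: "j < n"
    and eq: "cis (2 * pi * real m / real n) ^ i = cis (2 * pi * real m / real n) ^ j"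
  shows False
proof -
  define \<theta> where "\<theta> = 2 * pi * real m / real n"
  define k where "k = j - i"
  have k: "0 < k" "k < n" using ij j by (auto simp: k_def)
  have "cis (real j * \<theta>) / cis (real i * \<theta>) = 1"
    using eq unfolding \<theta>_def[symmetric] DeMoivre by simp
  hence "cis (real k * \<theta>) = 1" unfolding cis_divide k_def using ij
    by (simp add: of_nat_diff left_diff_distrib)
  hence "cos (real k * \<theta>) = 1" by (metis cis.simps(1) one_complex.simps(1))
  then obtain z :: int where z: "real k * \<theta> = real_of_int z * 2 * pi" by (auto simp: cos_one_2pi_int)
  hence "real k * real m = real_of_int z * real n" unfolding \<theta>_def using n
    by (simp add: field_simps)
  hence "int (k * m) = z * int n" by (metis of_int_eq_iff of_int_mult of_int_of_nat_eq of_nat_mult)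
  hence "int n dvd int (k * m)" by simp
  hence "n dvd k * m" by (simp only: int_dvd_int_iff)
  hence "n dvd k" using cop by (simp add: coprime_commute coprime_dvd_mult_left_iff)
  thus False using k by (auto dest: dvd_imp_le)
qed

lemma q_pow_inj:
  assumes n: "0 < n" and cop: "coprime m n" and i: "i < n" and j: "j < n"
    and eq: "cis (2 * pi * real m / real n) ^ i = cis (2 * pi * real m / real n) ^ j"
  shows "i = j"
  using q_pow_inj_aux[OF n cop _ j eq] q_pow_inj_aux[OF n cop _ i eq[symmetric]]
  by (cases "i < j") (auto simp: not_less_iff_gr_or_eq)

lemma clock_diagc: "clock_mat n m = diagc n (\<lambda>i. cis (2 * pi * real m / real n) ^ i)"
  by (simp add: clock_mat_def diagc_def)

lemma shift_left: assumes a: "a \<in> carrier_mat n n" and i: "i < n" and j: "j < n"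
  shows "(shift_mat n * a) $$ (i,j) = a $$ ((i+1) mod n, j)"
proof -
  have "(shift_mat n * a) $$ (i,j) = (\<Sum>k<n. (if k = (i+1) mod n then 1 else 0) * a $$ (k,j))"
    using a i j by (simp add: shift_mat_def scalar_prod_def atLeast0LessThan)
  also have "\<dots> = (\<Sum>k<n. if k = (i+1) mod n then a $$ (k,j) else 0)"
    by (rule sum.cong) auto
  also have "\<dots> = a $$ ((i+1) mod n, j)" using i by simp
  finally show ?thesis .
qed

lemma shift_right: assumes a: "a \<in> carrier_mat n n" and i: "i < n"
  shows "(a * shift_mat n) $$ (i,(i+1) mod n) = a $$ (i, i)"
proof -
  have "(a * shift_mat n) $$ (i,(i+1) mod n) = (\<Sum>k<n. a $$ (i,k) * (if (i+1) mod n = (k+1) mod n then 1 else 0))"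
    using a i by (simp add: shift_mat_def scalar_prod_def atLeast0LessThan)
  also have "\<dots> = (\<Sum>k<n. if k = i then a $$ (i,k) else 0)"
  proof (rule sum.cong)
    fix k assume "k \<in> {..<n}"
    hence k: "k < n" by simp
    have "(k+1) mod n = (i+1) mod n \<Longrightarrow> k = i" using k i
      by (metis Suc_eq_plus1 Suc_lessI mod_Suc mod_less nat.inject old.nat.distinct(1))
    thus "a $$ (i,k) * (if (i+1) mod n = (k+1) mod n then 1 else 0) = (if k = i then a $$ (i,k) else 0)"
      by auto
  qed simp
  also have "\<dots> = a $$ (i,i)" using i by simp
  finally show ?thesis .
qed

lemma scalar_of_comm:
  assumes n: "0 < n" and cop: "coprime m n" and a: "a \<in> carrier_mat n n"
    and ca: "a * clock_mat n m = clock_mat n m * a" and sa: "a * shift_mat n = shift_mat n * a"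
  shows "a = a $$ (0,0) \<cdot>\<^sub>m 1\<^sub>m n"
proof -
  define q where "q = cis (2 * pi * real m / real n)"
  have off: "a $$ (i,j) = 0" if i: "i < n" and j: "j < n" and ij: "i \<noteq> j" for i j
  proof -
    have "(a * clock_mat n m) $$ (i,j) = (clock_mat n m * a) $$ (i,j)" by (simp add: ca)
    hence "a $$ (i,j) * q ^ j = q ^ i * a $$ (i,j)"
      unfolding clock_diagc q_def using a i j by (simp add: diagc_mult_left diagc_mult_right)
    moreover have "q ^ i \<noteq> q ^ j" using q_pow_inj[OF n cop i j] ij unfolding q_def by auto
    ultimately show ?thesis by (auto simp: mult.commute)
  qed
  have step: "a $$ (i,i) = a $$ ((i+1) mod n, (i+1) mod n)" if i: "i < n" for i
  proof -
    have "(a * shift_mat n) $$ (i,(i+1) mod n) = (shift_mat n * a) $$ (i,(i+1) mod n)" by (simp add: sa)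
    thus ?thesis using shift_left[OF a i] shift_right[OF a i] n by simp
  qed
  have diag: "i < n \<Longrightarrow> a $$ (i,i) = a $$ (0,0)" for i
  proof (induction i)
    case (Suc i)
    hence "a $$ (i,i) = a $$ (Suc i, Suc i)" using step[of i] by simp
    thus ?case using Suc by simp
  qed simp
  show ?thesis
  proof (rule eq_matI)
    fix i j assume "i < dim_row (a $$ (0,0) \<cdot>\<^sub>m 1\<^sub>m n)" "j < dim_col (a $$ (0,0) \<cdot>\<^sub>m 1\<^sub>m n)"
    hence i: "i < n" and j: "j < n" by auto
    show "a $$ (i,j) = (a $$ (0,0) \<cdot>\<^sub>m 1\<^sub>m n) $$ (i,j)"
      using off[OF i j] diag[OF i] i j by (cases "i = j") auto
  qed (use a in auto)
qed

lemma smult_UDV: assumes U: "U \<in> carrier_mat n n" and V: "V \<in> carrier_mat n n"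
  shows "c \<cdot>\<^sub>m (U * diagc n f * V) = U * diagc n (\<lambda>i. c * f i) * V"
proof (rule eq_matI)
  fix i j assume "i < dim_row (U * diagc n (\<lambda>i. c * f i) * V)" "j < dim_col (U * diagc n (\<lambda>i. c * f i) * V)"
  hence i: "i < n" and j: "j < n" using U V by auto
  have "(c \<cdot>\<^sub>m (U * diagc n f * V)) $$ (i,j) = c * (U * diagc n f * V) $$ (i,j)"
    using U V i j by simp
  also have "\<dots> = (U * diagc n (\<lambda>i. c * f i) * V) $$ (i,j)"
    unfolding UDV_entry[OF U V i j] by (simp add: sum_distrib_left mult_ac)
  finally show "(c \<cdot>\<^sub>m (U * diagc n f * V)) $$ (i,j) = (U * diagc n (\<lambda>i. c * f i) * V) $$ (i,j)" .
qed (use U V in auto)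

lemma commute_mexp:
  assumes hx: "hermitian_mat n x" and a: "a \<in> carrier_mat n n" and xa: "x * a = a * x"
  shows "a * mexp (c \<cdot>\<^sub>m x) = mexp (c \<cdot>\<^sub>m x) * a"
proof -
  obtain V d where V: "V \<in> carrier_mat n n" and VV: "cadj V * V = 1\<^sub>m n" and VV': "V * cadj V = 1\<^sub>m n"
    and xd: "x = V * diagr n d * cadj V"
    using spectral[OF hx] by blast
  let ?D = "diagr n d"
  let ?F = "diagc n (\<lambda>i. exp (c * complex_of_real (d i)))"
  define b where "b = cadj V * a * V"
  have bc: "b \<in> carrier_mat n n" using V a by (simp add: b_def)
  have ab: "a = cj V b" unfolding b_def by (rule cj_inv[OF V VV VV' a, symmetric])
  have xD: "x = cj V ?D" unfolding cj_def by (rule xd)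
  have me: "mexp (c \<cdot>\<^sub>m x) = cj V ?F" unfolding xd diagr_diagc cj_def
    by (simp add: smult_UDV[OF V cadj_carrier[OF V]] mexp_UDV[OF V cadj_carrier[OF V] VV VV'])
  have "cj V (?D * b) = cj V (b * ?D)"
    using xa unfolding xD ab by (simp add: cj_mult[OF V VV VV'] bc)
  hence "cadj V * cj V (?D * b) * V = cadj V * cj V (b * ?D) * V" by simp
  hence Db: "?D * b = b * ?D"
    using V bc unfolding cj_def
    by (simp add: assoc_mult_mat[of _ n n _ n _ n] VV flip: assoc_mult_mat[of "cadj V" n n V n _ n])
  have Fb: "?F * b = b * ?F"
  proof (rule eq_matI)
    fix i j assume "i < dim_row (b * ?F)" "j < dim_col (b * ?F)"
    hence i: "i < n" and j: "j < n" using bc by (auto simp: dim_diagc)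
    have "(?D * b) $$ (i,j) = (b * ?D) $$ (i,j)" by (simp add: Db)
    hence "complex_of_real (d i) * b $$ (i,j) = b $$ (i,j) * complex_of_real (d j)"
      unfolding diagr_diagc using bc i j by (simp add: diagc_mult_left diagc_mult_right)
    hence "b $$ (i,j) = 0 \<or> d i = d j" by (auto simp: mult.commute)
    thus "(?F * b) $$ (i,j) = (b * ?F) $$ (i,j)"
      using bc i j by (auto simp: diagc_mult_left diagc_mult_right)
  qed (use bc in \<open>auto simp: dim_diagc\<close>)
  show ?thesis unfolding me ab using bc
    by (simp add: cj_mult[OF V VV VV'] Fb)
qed

lemma comm_scalar: assumes A: "(A::complex mat) \<in> carrier_mat n n"
  shows "comm A (c \<cdot>\<^sub>m 1\<^sub>m n) = 0\<^sub>m n n"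
proof -
  have "A * (c \<cdot>\<^sub>m 1\<^sub>m n) = c \<cdot>\<^sub>m A" by (subst mult_smult_distrib[OF A one_carrier_mat]) (use A in simp)
  moreover have "(c \<cdot>\<^sub>m 1\<^sub>m n) * A = c \<cdot>\<^sub>m A" by (subst mult_smult_assoc_mat[OF one_carrier_mat A]) (use A in simp)
  ultimately show ?thesis unfolding comm_def using A by simp
qed

lemma comm_zero_right: assumes A: "(A::complex mat) \<in> carrier_mat n n"
  shows "comm A (0\<^sub>m n n) = 0\<^sub>m n n"
  unfolding comm_def using A by (simp add: right_mult_zero_mat[OF A] left_mult_zero_mat[OF A])

theorem proposition3p1:
  fixes n m :: nat and x y a :: "complex mat"
  assumes "n \<ge> 2" and "1 \<le> m" and "m \<le> n - 1" and "coprime m n"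
    and "hermitian_mat n x" and "hermitian_mat n y"
    and "clock_mat n m = mexp ((complex_of_real (2 * pi / real n) * \<i>) \<cdot>\<^sub>m x)"
    and "shift_mat n = mexp ((complex_of_real (2 * pi / real n) * \<i>) \<cdot>\<^sub>m y)"
    and "hermitian_mat n a"
  shows "0 \<le> mtrace (mexp a * laplacian x y a)
    \<and> (mtrace (mexp a * laplacian x y a) = 0 \<longleftrightarrow> (\<exists>c::complex. a = c \<cdot>\<^sub>m 1\<^sub>m n))"
proof -
  have n: "0 < n" using assms(1) by simp
  have a: "a \<in> carrier_mat n n" using assms(9) by (simp add: hermitian_mat_def)
  have x: "x \<in> carrier_mat n n" using assms(5) by (simp add: hermitian_mat_def)
  have y: "y \<in> carrier_mat n n" using assms(6) by (simp add: hermitian_mat_def)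
  obtain R where T: "mtrace (mexp a * laplacian x y a) = complex_of_real R" and R: "R \<ge> 0"
    and R0: "R = 0 \<longrightarrow> x * a = a * x \<and> y * a = a * y"
    using main_trace[OF assms(5) assms(6) assms(9)] by blast
  have nn: "0 \<le> mtrace (mexp a * laplacian x y a)" using T R by (simp add: less_eq_complex_def)
  have iff: "mtrace (mexp a * laplacian x y a) = 0 \<longleftrightarrow> (\<exists>c::complex. a = c \<cdot>\<^sub>m 1\<^sub>m n)"
  proof
    assume "mtrace (mexp a * laplacian x y a) = 0"
    hence "R = 0" using T by simp
    hence xa: "x * a = a * x" and ya: "y * a = a * y" using R0 by auto
    have "a * clock_mat n m = clock_mat n m * a"
      unfolding assms(7) by (rule commute_mexp[OF assms(5) a xa])
    moreover have "a * shift_mat n = shift_mat n * a"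
      unfolding assms(8) by (rule commute_mexp[OF assms(6) a ya])
    ultimately have "a = a $$ (0,0) \<cdot>\<^sub>m 1\<^sub>m n"
      by (rule scalar_of_comm[OF n assms(4) a])
    thus "\<exists>c::complex. a = c \<cdot>\<^sub>m 1\<^sub>m n" by blast
  next
    assume "\<exists>c::complex. a = c \<cdot>\<^sub>m 1\<^sub>m n"
    then obtain c where ac: "a = c \<cdot>\<^sub>m 1\<^sub>m n" by blast
    have "laplacian x y a = 0\<^sub>m n n"
      using x y a by (simp add: laplacian_alt ac comm_scalar comm_zero_right)
    moreover have "mexp a \<in> carrier_mat n n" using a by (simp add: mexp_def)
    ultimately have "mexp a * laplacian x y a = 0\<^sub>m n n" by (simp add: right_mult_zero_mat)
    thus "mtrace (mexp a * laplacian x y a) = 0" by (simp add: mtrace_def)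
  qed
  show ?thesis using nn iff by blast
qed

end
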